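(* Let $h,u,q$ be positive integers with $h\equiv 2$ or $4\pmod 6$, $u\equiv 0\pmod 3$, $u\ge 6$, and $q$ not divisible by $3$. Suppose there exists a $(u+1)$-GDD of type $q^{u+1}$. Call a positive integer $d$ admissible if $d\equiv h\pmod 3$ and $d\le h(u-1)/2$, and suppose that for every admissible $d$ there exists a 4-GDD of type $h^u d^1$; let $d_{\min}$ be the smallest admissible $d$. Then there exists a 4-GDD of type $(hq)^u m^1$ for every integer $m\equiv hq\pmod 3$ with $q\,d_{\min}\le m\le qh(u-1)/2$.
   Context: For a set $K$ of positive integers, a $K$-GDD (group divisible design) is a triple $(V,\mathcal G,\mathcal B)$ where $V$ is a finite set, $\mathcal G$ is a partition of $V$ into subsets called groups, $\mathcal B$ is a nonempty collection of subsets of $V$ (blocks) with sizes in $K$, such that every pair of points from distinct groups lies in exactly one block and no pair of points from the same group lies in any block. A $k$-GDD means a $\{k\}$-GDD. The type $g_1^{u_1}\cdots g_r^{u_r}$ means exactly $u_i$ groups of size $g_i$ for each $i$; type $h^u d^1$ means $u$ groups of size $h$ and one group of size $d$. *)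

theory Defs
  imports Main "HOL-Library.Multiset"
begin

definition is_GDD :: "nat set \<Rightarrow> 'a set \<Rightarrow> 'a set set \<Rightarrow> 'a set set \<Rightarrow> bool" where
  "is_GDD K V G B \<longleftrightarrow>
     finite V \<and>
     (\<forall>g\<in>G. g \<noteq> {} \<and> g \<subseteq> V) \<and> \<Union>G = V \<and>
     (\<forall>g1\<in>G. \<forall>g2\<in>G. g1 \<noteq> g2 \<longrightarrow> g1 \<inter> g2 = {}) \<and>
     B \<noteq> {} \<and>
     (\<forall>b\<in>B. b \<subseteq> V \<and> card b \<in> K) \<and>
     (\<forall>x\<in>V. \<forall>y\<in>V. x \<noteq> y \<longrightarrow> \<not> (\<exists>g\<in>G. x \<in> g \<and> y \<in> g) \<longrightarrow>
        (\<exists>!b. b \<in> B \<and> x \<in> b \<and> y \<in> b)) \<and>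
     (\<forall>b\<in>B. \<forall>g\<in>G. \<forall>x\<in>g. \<forall>y\<in>g. x \<noteq> y \<longrightarrow> \<not> (x \<in> b \<and> y \<in> b))"

definition gdd_type :: "'a set set \<Rightarrow> nat multiset" where
  "gdd_type G = image_mset card (mset_set G)"

definition GDD_exists :: "nat set \<Rightarrow> nat multiset \<Rightarrow> bool" where
  "GDD_exists K T \<longleftrightarrow> (\<exists>(V::nat set) G B. is_GDD K V G B \<and> gdd_type G = T)"

definition type_hu_d :: "nat \<Rightarrow> nat \<Rightarrow> nat \<Rightarrow> nat multiset" where
  "type_hu_d h u d = replicate_mset u h + {#d#}"

definition admissible :: "nat \<Rightarrow> nat \<Rightarrow> nat \<Rightarrow> bool" where
  "admissible h u d \<longleftrightarrow> 0 < d \<and> d mod 3 = h mod 3 \<and> 2 * d \<le> h * (u - 1)"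

end

theory Submission
  imports Defs "HOL-Library.Nat_Bijection"
begin

lemma is_GDD_D:
  assumes "is_GDD K V G B"
  shows "finite V" "\<forall>g\<in>G. g \<noteq> {} \<and> g \<subseteq> V" "\<Union>G = V"
    "\<forall>g1\<in>G. \<forall>g2\<in>G. g1 \<noteq> g2 \<longrightarrow> g1 \<inter> g2 = {}"
    "B \<noteq> {}" "\<forall>b\<in>B. b \<subseteq> V \<and> card b \<in> K"
    "\<forall>x\<in>V. \<forall>y\<in>V. x \<noteq> y \<longrightarrow> \<not> (\<exists>g\<in>G. x \<in> g \<and> y \<in> g) \<longrightarrow>
        (\<exists>!b. b \<in> B \<and> x \<in> b \<and> y \<in> b)"
    "\<forall>b\<in>B. \<forall>g\<in>G. \<forall>x\<in>g. \<forall>y\<in>g. x \<noteq> y \<longrightarrow> \<not> (x \<in> b \<and> y \<in> b)"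
  using assms unfolding is_GDD_def apply - by ((elim conjE)?, assumption)+

lemma is_GDD_I:
  assumes "finite V" "\<forall>g\<in>G. g \<noteq> {} \<and> g \<subseteq> V" "\<Union>G = V"
    "\<forall>g1\<in>G. \<forall>g2\<in>G. g1 \<noteq> g2 \<longrightarrow> g1 \<inter> g2 = {}"
    "B \<noteq> {}" "\<forall>b\<in>B. b \<subseteq> V \<and> card b \<in> K"
    "\<forall>x\<in>V. \<forall>y\<in>V. x \<noteq> y \<longrightarrow> \<not> (\<exists>g\<in>G. x \<in> g \<and> y \<in> g) \<longrightarrow>
        (\<exists>!b. b \<in> B \<and> x \<in> b \<and> y \<in> b)"
    "\<forall>b\<in>B. \<forall>g\<in>G. \<forall>x\<in>g. \<forall>y\<in>g. x \<noteq> y \<longrightarrow> \<not> (x \<in> b \<and> y \<in> b)"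
  shows "is_GDD K V G B"
  unfolding is_GDD_def using assms by (intro conjI)

lemma is_GDD_relabel:
  assumes gdd: "is_GDD K V G B" and inj: "inj_on f V"
  shows "is_GDD K (f`V) ((`) f ` G) ((`) f ` B)"
proof -
  note D = is_GDD_D[OF gdd]
  note fin = D(1) and gr = D(2) and un = D(3) and disj = D(4) and bne = D(5) and bl = D(6)
    and pair = D(7) and nop = D(8)
  have img_in: "\<And>A x. A \<subseteq> V \<Longrightarrow> x \<in> V \<Longrightarrow> f x \<in> f ` A \<longleftrightarrow> x \<in> A"
    using inj by (auto simp: inj_on_def)
  show ?thesis
  proof (rule is_GDD_I; (intro ballI allI impI)?)
    show "finite (f ` V)" using fin by simp
  next
    fix g' assume "g' \<in> (`) f ` G"
    then show "g' \<noteq> {} \<and> g' \<subseteq> f ` V" using gr by auto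
  next
    show "\<Union> ((`) f ` G) = f ` V" using un by auto
  next
    fix g1 g2 assume a: "g1 \<in> (`) f ` G" "g2 \<in> (`) f ` G" "g1 \<noteq> g2"
    then obtain h1 h2 where h: "h1 \<in> G" "h2 \<in> G" "g1 = f ` h1" "g2 = f ` h2" by auto
    with a have "h1 \<noteq> h2" by auto
    with h disj have "h1 \<inter> h2 = {}" by blast
    moreover have "f ` (h1 \<inter> h2) = f ` h1 \<inter> f ` h2"
      using inj gr h by (intro inj_on_image_Int) auto
    ultimately show "g1 \<inter> g2 = {}" using h by simp
  next
    show "(`) f ` B \<noteq> {}" using bne by simp
  next
    fix b' assume "b' \<in> (`) f ` B"
    then obtain b where b: "b \<in> B" "b' = f ` b" by auto
    have "card b' = card b" using b bl inj by (metis card_image inj_on_subset)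
    then show "b' \<subseteq> f ` V \<and> card b' \<in> K" using b bl by auto
  next
    fix x' y' assume x': "x' \<in> f ` V" and y': "y' \<in> f ` V" and ne: "x' \<noteq> y'"
      and ng: "\<not> (\<exists>g\<in>(`) f ` G. x' \<in> g \<and> y' \<in> g)"
    then obtain x y where xy: "x \<in> V" "y \<in> V" "x' = f x" "y' = f y" by auto
    have "x \<noteq> y" using ne xy by auto
    moreover have "\<not> (\<exists>g\<in>G. x \<in> g \<and> y \<in> g)" using ng xy by blast
    ultimately obtain b where b: "b \<in> B" "x \<in> b" "y \<in> b"
      and u: "\<And>c. c \<in> B \<Longrightarrow> x \<in> c \<Longrightarrow> y \<in> c \<Longrightarrow> c = b" using pair xy by metis
    show "\<exists>!b'. b' \<in> (`) f ` B \<and> x' \<in> b' \<and> y' \<in> b'"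
    proof
      show "f ` b \<in> (`) f ` B \<and> x' \<in> f ` b \<and> y' \<in> f ` b" using b xy by auto
    next
      fix c' assume "c' \<in> (`) f ` B \<and> x' \<in> c' \<and> y' \<in> c'"
      then obtain c where c: "c \<in> B" "c' = f ` c" "f x \<in> f ` c" "f y \<in> f ` c" using xy by auto
      have "x \<in> c" "y \<in> c" using c img_in bl xy by blast+
      then show "c' = f ` b" using u c by auto
    qed
  next
    fix b' g' x' y' assume b': "b' \<in> (`) f ` B" and g': "g' \<in> (`) f ` G" and x': "x' \<in> g'"
      and y': "y' \<in> g'" and ne: "x' \<noteq> y'"
    then obtain b g where bg: "b \<in> B" "g \<in> G" "b' = f ` b" "g' = f ` g" by auto
    then obtain x y where xy: "x \<in> g" "y \<in> g" "x' = f x" "y' = f y" using x' y' by auto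
    have "x \<noteq> y" using ne xy by auto
    then have "\<not> (x \<in> b \<and> y \<in> b)" using nop bg xy by blast
    moreover have "x \<in> V" "y \<in> V" using gr bg xy by auto
    moreover have bV: "b \<subseteq> V" using bl bg by blast
    ultimately show "\<not> (x' \<in> b' \<and> y' \<in> b')" using img_in[OF bV, of x] img_in[OF bV, of y] bg xy by auto
  qed
qed



lemma wilson:
  fixes w :: "'a \<Rightarrow> nat" and Bb :: "'a set \<Rightarrow> ('a \<times> nat) set set"
  assumes gdd: "is_GDD K0 V0 G0 B0"
    and wpos: "\<forall>x\<in>V0. 0 < w x"
    and ing: "\<forall>b\<in>B0. is_GDD K (Sigma b (\<lambda>x. {..<w x})) ((\<lambda>x. {x} \<times> {..<w x}) ` b) (Bb b)"
  shows "is_GDD K (Sigma V0 (\<lambda>x. {..<w x})) ((\<lambda>g. Sigma g (\<lambda>x. {..<w x})) ` G0) (\<Union>b\<in>B0. Bb b)"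
proof -
  define W where "W = (\<lambda>x. {..<w x})"
  note D = is_GDD_D[OF gdd]
  note fin = D(1) and gr = D(2) and un = D(3) and disj = D(4) and bne = D(5) and bl = D(6)
    and pair = D(7) and nop = D(8)
  have ingD: "\<And>b. b \<in> B0 \<Longrightarrow> is_GDD K (Sigma b W) ((\<lambda>x. {x} \<times> W x) ` b) (Bb b)"
    using ing unfolding W_def by blast
  have sub: "\<And>b c. b \<in> B0 \<Longrightarrow> c \<in> Bb b \<Longrightarrow> c \<subseteq> Sigma b W"
    using is_GDD_D(6)[OF ingD] by blast
  show ?thesis unfolding W_def[symmetric]
  proof (rule is_GDD_I; (intro ballI allI impI)?)
    show "finite (Sigma V0 W)" using fin unfolding W_def by auto
  next
    fix g' assume "g' \<in> (\<lambda>g. Sigma g W) ` G0"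
    then obtain g where g: "g \<in> G0" "g' = Sigma g W" by auto
    then obtain x where x: "x \<in> g" using gr by auto
    then have "(x, 0) \<in> g'" using g gr wpos unfolding W_def by auto
    then show "g' \<noteq> {} \<and> g' \<subseteq> Sigma V0 W" using g gr by auto
  next
    show "\<Union> ((\<lambda>g. Sigma g W) ` G0) = Sigma V0 W" using un by auto
  next
    fix g1 g2 assume a: "g1 \<in> (\<lambda>g. Sigma g W) ` G0" "g2 \<in> (\<lambda>g. Sigma g W) ` G0" "g1 \<noteq> g2"
    then obtain h1 h2 where h: "h1 \<in> G0" "h2 \<in> G0" "g1 = Sigma h1 W" "g2 = Sigma h2 W" by auto
    with a have "h1 \<noteq> h2" by auto
    with h disj have "h1 \<inter> h2 = {}" by blast
    then show "g1 \<inter> g2 = {}" using h by auto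
  next
    obtain b where b: "b \<in> B0" using bne by auto
    then have "Bb b \<noteq> {}" using is_GDD_D(5)[OF ingD] by blast
    then show "(\<Union>b\<in>B0. Bb b) \<noteq> {}" using b by auto
  next
    fix c assume "c \<in> (\<Union>b\<in>B0. Bb b)"
    then obtain b where b: "b \<in> B0" "c \<in> Bb b" by auto
    have "card c \<in> K" using is_GDD_D(6)[OF ingD[OF b(1)]] b by blast
    moreover have "c \<subseteq> Sigma b W" using sub b by blast
    moreover have "b \<subseteq> V0" using bl b by blast
    ultimately show "c \<subseteq> Sigma V0 W \<and> card c \<in> K" by blast
  next
    fix p1 p2 assume p1: "p1 \<in> Sigma V0 W" and p2: "p2 \<in> Sigma V0 W" and ne: "p1 \<noteq> p2"
      and ng: "\<not> (\<exists>g\<in>(\<lambda>g. Sigma g W) ` G0. p1 \<in> g \<and> p2 \<in> g)"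
    obtain x i y j where pp: "p1 = (x, i)" "p2 = (y, j)" by (cases p1, cases p2) auto
    have xV: "x \<in> V0" "i \<in> W x" using p1 pp by auto
    have yV: "y \<in> V0" "j \<in> W y" using p2 pp by auto
    have ng0: "\<not> (\<exists>g\<in>G0. x \<in> g \<and> y \<in> g)"
    proof
      assume "\<exists>g\<in>G0. x \<in> g \<and> y \<in> g"
      then obtain g where "g \<in> G0" "x \<in> g" "y \<in> g" by blast
      then show False using ng pp xV yV by blast
    qed
    have xy: "x \<noteq> y"
    proof
      assume "x = y"
      then obtain g where "g \<in> G0" "x \<in> g" "y \<in> g" using un xV by blast
      then show False using ng0 by blast
    qed
    obtain b where b: "b \<in> B0" "x \<in> b" "y \<in> b"
      and bu: "\<And>b'. b' \<in> B0 \<Longrightarrow> x \<in> b' \<Longrightarrow> y \<in> b' \<Longrightarrow> b' = b"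
      using pair xV yV xy ng0 by metis
    note DI = is_GDD_D[OF ingD[OF b(1)]]
    have a1: "p1 \<in> Sigma b W" and a2: "p2 \<in> Sigma b W" using pp b xV yV by auto
    have a3: "\<not> (\<exists>g\<in>(\<lambda>x. {x} \<times> W x) ` b. p1 \<in> g \<and> p2 \<in> g)" using xy pp by auto
    have "\<exists>!c. c \<in> Bb b \<and> p1 \<in> c \<and> p2 \<in> c" using DI(7)[rule_format, OF a1 a2 ne a3] .
    then obtain c where c: "c \<in> Bb b" "p1 \<in> c" "p2 \<in> c"
      and cu: "\<And>c'. c' \<in> Bb b \<Longrightarrow> p1 \<in> c' \<Longrightarrow> p2 \<in> c' \<Longrightarrow> c' = c" by metis
    show "\<exists>!c. c \<in> (\<Union>b\<in>B0. Bb b) \<and> p1 \<in> c \<and> p2 \<in> c"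
    proof
      show "c \<in> (\<Union>b\<in>B0. Bb b) \<and> p1 \<in> c \<and> p2 \<in> c" using c b by auto
    next
      fix c' assume c': "c' \<in> (\<Union>b\<in>B0. Bb b) \<and> p1 \<in> c' \<and> p2 \<in> c'"
      then obtain b' where b': "b' \<in> B0" "c' \<in> Bb b'" by auto
      have "c' \<subseteq> Sigma b' W" using sub b' by blast
      then have "x \<in> b'" "y \<in> b'" using c' pp by auto
      then have "b' = b" using bu b' by blast
      then show "c' = c" using cu b' c' by blast
    qed
  next
    fix c g' p1 p2 assume c: "c \<in> (\<Union>b\<in>B0. Bb b)" and g': "g' \<in> (\<lambda>g. Sigma g W) ` G0"
      and p1: "p1 \<in> g'" and p2: "p2 \<in> g'" and ne: "p1 \<noteq> p2"
    show "\<not> (p1 \<in> c \<and> p2 \<in> c)"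
    proof
      assume pc: "p1 \<in> c \<and> p2 \<in> c"
      obtain b where b: "b \<in> B0" "c \<in> Bb b" using c by auto
      obtain g where g: "g \<in> G0" "g' = Sigma g W" using g' by auto
      obtain x i y j where pp: "p1 = (x, i)" "p2 = (y, j)" by (cases p1, cases p2) auto
      have "c \<subseteq> Sigma b W" using sub b by blast
      then have xb: "x \<in> b" "y \<in> b" "i \<in> W x" "j \<in> W y" using pc pp by auto
      have xg: "x \<in> g" "y \<in> g" using p1 p2 pp g by auto
      show False
      proof (cases "x = y")
        case True
        note DI = is_GDD_D[OF ingD[OF b(1)]]
        have q1: "{x} \<times> W x \<in> (\<lambda>x. {x} \<times> W x) ` b" using xb by auto
        have q2: "p1 \<in> {x} \<times> W x" and q3: "p2 \<in> {x} \<times> W x" using xb pp True by auto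
        show False using DI(8)[rule_format, OF b(2) q1 q2 q3 ne] pc by blast
      next
        case False
        then show False using nop b g xb xg by blast
      qed
    qed
  qed
qed



lemma ingredient:
  fixes w :: "'b \<Rightarrow> nat" and V' :: "'a set"
  assumes gdd: "is_GDD K V' G' B'"
    and sig: "bij_betw \<sigma> G' b" and cardw: "\<forall>g\<in>G'. card g = w (\<sigma> g)"
  shows "\<exists>B. is_GDD K (Sigma b (\<lambda>x. {..<w x})) ((\<lambda>x. {x} \<times> {..<w x}) ` b) B"
proof -
  define W where "W = (\<lambda>x. {..<w x})"
  note D = is_GDD_D[OF gdd]
  have "\<forall>g\<in>G'. \<exists>t. bij_betw t g (W (\<sigma> g))"
  proof
    fix g assume g: "g \<in> G'"
    have "finite g" using D(1) D(2) g by (meson finite_subset)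
    moreover have "card g = card (W (\<sigma> g))" using cardw g unfolding W_def by simp
    ultimately show "\<exists>t. bij_betw t g (W (\<sigma> g))"
      using finite_same_card_bij[of g "W (\<sigma> g)"] unfolding W_def by auto
  qed
  then obtain \<tau> where tau: "\<And>g. g \<in> G' \<Longrightarrow> bij_betw (\<tau> g) g (W (\<sigma> g))" by metis
  define grp where "grp v = (THE g. g \<in> G' \<and> v \<in> g)" for v
  have grp: "\<And>g v. g \<in> G' \<Longrightarrow> v \<in> g \<Longrightarrow> grp v = g"
  proof -
    fix g v assume a: "g \<in> G'" "v \<in> g"
    show "grp v = g" unfolding grp_def
    proof (rule the_equality)
      show "g \<in> G' \<and> v \<in> g" using a by blast
    next
      fix g2 assume "g2 \<in> G' \<and> v \<in> g2"
      then show "g2 = g" using D(4) a by blast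
    qed
  qed
  have inV: "\<And>v. v \<in> V' \<Longrightarrow> \<exists>g\<in>G'. v \<in> g" using D(3) by blast
  define f where "f v = (\<sigma> (grp v), \<tau> (grp v) v)" for v
  have fg: "\<And>g. g \<in> G' \<Longrightarrow> f ` g = {\<sigma> g} \<times> W (\<sigma> g)"
  proof -
    fix g assume g: "g \<in> G'"
    have "f ` g = (\<lambda>v. (\<sigma> g, \<tau> g v)) ` g" using grp g unfolding f_def by auto
    also have "\<dots> = {\<sigma> g} \<times> (\<tau> g ` g)" by auto
    also have "\<tau> g ` g = W (\<sigma> g)" using tau[OF g] by (simp add: bij_betw_def)
    finally show "f ` g = {\<sigma> g} \<times> W (\<sigma> g)" .
  qed
  have inj: "inj_on f V'"
  proof
    fix v1 v2 assume v: "v1 \<in> V'" "v2 \<in> V'" "f v1 = f v2"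
    obtain g1 where g1: "g1 \<in> G'" "v1 \<in> g1" using inV v by blast
    obtain g2 where g2: "g2 \<in> G'" "v2 \<in> g2" using inV v by blast
    have "\<sigma> g1 = \<sigma> g2" using v(3) grp g1 g2 unfolding f_def by auto
    then have "g1 = g2" using sig g1 g2 by (auto simp: bij_betw_def inj_on_def)
    moreover have "\<tau> g1 v1 = \<tau> g2 v2" using v(3) grp g1 g2 unfolding f_def by auto
    ultimately show "v1 = v2" using tau[OF g1(1)] g1 g2 by (auto simp: bij_betw_def inj_on_def)
  qed
  have imgG: "(`) f ` G' = (\<lambda>x. {x} \<times> W x) ` b"
  proof -
    have "(`) f ` G' = (\<lambda>g. {\<sigma> g} \<times> W (\<sigma> g)) ` G'" using fg by (auto simp: image_iff)
    also have "\<dots> = (\<lambda>x. {x} \<times> W x) ` (\<sigma> ` G')" by (simp add: image_image)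
    also have "\<sigma> ` G' = b" using sig by (simp add: bij_betw_def)
    finally show ?thesis .
  qed
  have imgV: "f ` V' = Sigma b W"
  proof -
    have "f ` V' = f ` (\<Union>G')" using D(3) by simp
    also have "\<dots> = (\<Union>g\<in>G'. f ` g)" by auto
    also have "\<dots> = (\<Union>g\<in>G'. {\<sigma> g} \<times> W (\<sigma> g))" using fg by simp
    also have "\<dots> = (\<Union>x\<in>\<sigma> ` G'. {x} \<times> W x)" by auto
    also have "\<dots> = Sigma b W" using sig by (auto simp: bij_betw_def)
    finally show ?thesis .
  qed
  show ?thesis using is_GDD_relabel[OF gdd inj] unfolding imgV imgG W_def by blast
qed



lemma match:
  fixes G' :: "'a set set" and b :: "'b set" and w :: "'b \<Rightarrow> nat"
  assumes fin: "finite G'" "finite b" and e: "e \<in> b"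
    and ty: "image_mset card (mset_set G') = replicate_mset n c + {#w e#}"
    and cb: "card b = Suc n" and wc: "\<forall>x\<in>b-{e}. w x = c"
  shows "\<exists>\<sigma>. bij_betw \<sigma> G' b \<and> (\<forall>g\<in>G'. card g = w (\<sigma> g))"
proof -
  have "w e \<in># image_mset card (mset_set G')" using ty by simp
  then obtain g0 where g0: "g0 \<in> G'" "card g0 = w e" using fin by auto
  have "mset_set G' = add_mset g0 (mset_set (G' - {g0}))" using mset_set.remove[OF fin(1) g0(1)] .
  then have ty2: "image_mset card (mset_set (G' - {g0})) = replicate_mset n c" using ty g0 by simp
  have c1: "card (G' - {g0}) = n" using arg_cong[OF ty2, of size] by simp
  have cards: "\<forall>g\<in>G'-{g0}. card g = c"
  proof
    fix g assume "g \<in> G' - {g0}"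
    then have "card g \<in># image_mset card (mset_set (G' - {g0}))" using fin by simp
    then show "card g = c" unfolding ty2 by (simp split: if_splits)
  qed
  have c2: "card (b - {e}) = n" using cb e fin by simp
  obtain \<sigma>1 where s1: "bij_betw \<sigma>1 (G' - {g0}) (b - {e})"
    using finite_same_card_bij[of "G' - {g0}" "b - {e}"] fin c1 c2 by auto
  define \<sigma> where "\<sigma> = \<sigma>1(g0 := e)"
  have "bij_betw \<sigma> (G' - {g0}) (b - {e})"
    using s1 bij_betw_cong[of "G' - {g0}" \<sigma> \<sigma>1 "b - {e}"] unfolding \<sigma>_def by auto
  moreover have "bij_betw \<sigma> {g0} {e}" unfolding \<sigma>_def by (simp add: bij_betw_def)
  ultimately have "bij_betw \<sigma> ((G' - {g0}) \<union> {g0}) ((b - {e}) \<union> {e})"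
    by (rule bij_betw_combine) auto
  moreover have "(G' - {g0}) \<union> {g0} = G'" "(b - {e}) \<union> {e} = b" using g0 e by auto
  ultimately have bij: "bij_betw \<sigma> G' b" by simp
  have "\<forall>g\<in>G'. card g = w (\<sigma> g)"
  proof
    fix g assume g: "g \<in> G'"
    show "card g = w (\<sigma> g)"
    proof (cases "g = g0")
      case True then show ?thesis using g0 unfolding \<sigma>_def by simp
    next
      case False
      then have "\<sigma> g = \<sigma>1 g" unfolding \<sigma>_def by simp
      moreover have "\<sigma>1 g \<in> b - {e}" using s1 g False by (auto simp: bij_betw_def)
      ultimately show ?thesis using wc cards g False by auto
    qed
  qed
  then show ?thesis using bij by blast
qed

lemma block_meets:
  assumes gdd: "is_GDD K V0 G0 B0" and b: "b \<in> B0" and cb: "card b = card G0"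
    and g: "g \<in> G0"
  shows "\<exists>x\<in>b. x \<in> g"
proof -
  note D = is_GDD_D[OF gdd]
  have bV: "b \<subseteq> V0" using D(6) b by blast
  have finG: "finite G0"
  proof -
    have "G0 \<subseteq> Pow V0" using D(2) by blast
    then show ?thesis using D(1) by (meson finite_Pow_iff finite_subset)
  qed
  have finb: "finite b" using bV D(1) finite_subset by blast
  define \<phi> where "\<phi> x = (THE g. g \<in> G0 \<and> x \<in> g)" for x
  have phi: "\<And>x g. g \<in> G0 \<Longrightarrow> x \<in> g \<Longrightarrow> \<phi> x = g"
  proof -
    fix x g assume a: "g \<in> G0" "x \<in> g"
    show "\<phi> x = g" unfolding \<phi>_def
    proof (rule the_equality)
      show "g \<in> G0 \<and> x \<in> g" using a by blast
    next
      fix g2 assume "g2 \<in> G0 \<and> x \<in> g2"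
      then show "g2 = g" using D(4) a by blast
    qed
  qed
  have ex: "\<And>x. x \<in> V0 \<Longrightarrow> \<exists>g\<in>G0. x \<in> g" using D(3) by blast
  have inj: "inj_on \<phi> b"
  proof
    fix x y assume xy: "x \<in> b" "y \<in> b" "\<phi> x = \<phi> y"
    obtain g1 where g1: "g1 \<in> G0" "x \<in> g1" using ex xy bV by blast
    obtain g2 where g2: "g2 \<in> G0" "y \<in> g2" using ex xy bV by blast
    have "g1 = g2" using phi g1 g2 xy by metis
    then show "x = y" using D(8) b g1 g2 xy by blast
  qed
  have sub: "\<phi> ` b \<subseteq> G0" using phi ex bV by fastforce
  have "card (\<phi> ` b) = card G0" using card_image[OF inj] cb by simp
  then have "\<phi> ` b = G0" using card_subset_eq[OF finG sub] by simp
  then obtain x where x: "x \<in> b" "\<phi> x = g" using g by auto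
  obtain g1 where g1: "g1 \<in> G0" "x \<in> g1" using ex x bV by blast
  then have "g1 = g" using phi x by metis
  then show ?thesis using x g1 by blast
qed



lemma to_nat:
  assumes "is_GDD K (V :: (nat \<times> nat) set) G B" "gdd_type G = T"
  shows "GDD_exists K T"
proof -
  have inj: "inj prod_encode" by (rule inj_prod_encode)
  have g: "is_GDD K (prod_encode ` V) ((`) prod_encode ` G) ((`) prod_encode ` B)"
    by (rule is_GDD_relabel[OF assms(1) inj_prod_encode])
  have injG: "inj_on ((`) prod_encode) G" unfolding inj_on_def using inj_image_eq_iff[OF inj] by blast
  have "gdd_type ((`) prod_encode ` G) = image_mset card (image_mset ((`) prod_encode) (mset_set G))"
    unfolding gdd_type_def using image_mset_mset_set[OF injG] by simp
  also have "\<dots> = image_mset card (mset_set G)"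
    by (simp add: multiset.map_comp comp_def card_image inj_on_subset[OF inj])
  finally have "gdd_type ((`) prod_encode ` G) = T" using assms(2) unfolding gdd_type_def by simp
  then show ?thesis using g unfolding GDD_exists_def by blast
qed

lemma distribute:
  assumes "finite A"
  shows "t \<le> card A * K \<Longrightarrow> \<exists>k::'a \<Rightarrow> nat. (\<forall>a\<in>A. k a \<le> K) \<and> sum k A = t"
  using assms
proof (induction A arbitrary: t rule: finite_induct)
  case empty then show ?case by simp
next
  case (insert a A)
  define s where "s = min t K"
  have "t - s \<le> card A * K" using insert by (auto simp: s_def)
  then obtain k where k: "\<forall>a\<in>A. k a \<le> K" "sum k A = t - s" using insert by blast
  define k' where "k' = k(a := s)"
  have "sum k' A = sum k A" unfolding k'_def using insert by (intro sum.cong) auto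
  then have "sum k' (insert a A) = s + (t - s)" using insert k unfolding k'_def by simp
  also have "\<dots> = t" by (simp add: s_def)
  finally have c1: "sum k' (insert a A) = t" .
  have c2: "\<forall>x\<in>insert a A. k' x \<le> K" using k unfolding k'_def s_def by auto
  show ?case by (rule exI[of _ k'], rule conjI[OF c2 c1])
qed



lemma numeric:
  fixes h u q m :: nat and A :: "'a set"
  assumes hpos: "0 < h" and u6: "u \<ge> 6" and u3: "u mod 3 = 0"
    and h6: "h mod 6 = 2 \<or> h mod 6 = 4"
    and mm: "m mod 3 = (h * q) mod 3" and ml: "q * (LEAST d. admissible h u d) \<le> m"
    and mu: "2 * m \<le> q * h * (u - 1)" and finA: "finite A" and cA: "card A = q"
  shows "\<exists>dl. (\<forall>x\<in>A. admissible h u (dl x)) \<and> sum dl A = m"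
proof -
  have "2 \<le> u - 1" using u6 by simp
  then have "h * 2 \<le> h * (u - 1)" by (rule mult_le_mono2)
  then have "2 * h \<le> h * (u - 1)" by (simp add: mult.commute)
  then have adm_h: "admissible h u h" using hpos unfolding admissible_def by simp
  define dmin where "dmin = (LEAST d. admissible h u d)"
  have adm: "admissible h u dmin" unfolding dmin_def by (rule LeastI[of "admissible h u", OF adm_h])
  then have dpos: "0 < dmin" and dmod: "dmin mod 3 = h mod 3" and dle: "2 * dmin \<le> h * (u - 1)"
    unfolding admissible_def by auto
  have "h mod 2 = h mod 6 mod 2" by (simp add: mod_mod_cancel)
  then have "h mod 2 = 0" using h6 by auto
  then have "2 dvd h" by (simp add: mod_0_imp_dvd)
  then obtain h2 where h2: "h = 2 * h2" by (auto simp: dvd_def)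
  define H where "H = h2 * (u - 1)"
  have hH: "h * (u - 1) = 2 * H" unfolding H_def h2 by (simp only: mult.assoc)
  have um: "(u - 1) mod 3 = 2"
  proof -
    have "3 dvd u" using u3 by (simp add: mod_0_imp_dvd)
    then obtain v where v: "u = 3 * v" by (auto simp: dvd_def)
    then obtain v' where "v = Suc v'" using u6 by (cases v) auto
    then have e: "u - 1 = 2 + 3 * v'" using v by simp
    have "(2 + 3 * v') mod 3 = (2::nat)" by (simp only: mod_mult_self2) simp
    then show ?thesis unfolding e .
  qed
  have "H mod 3 = h2 * ((u - 1) mod 3) mod 3" unfolding H_def by (simp add: mod_mult_right_eq)
  also have "\<dots> = h mod 3" unfolding um h2 by (simp add: mult.commute)
  finally have Hmod: "H mod 3 = h mod 3" .
  have dH: "dmin \<le> H" using dle hH by simp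
  have "3 dvd H - dmin" using mod_eq_dvd_iff_nat[OF dH, of 3] Hmod dmod by simp
  then obtain K where K: "H - dmin = 3 * K" by (auto simp: dvd_def)
  have HK: "H = dmin + 3 * K" using K dH by simp
  have qdm: "(q * dmin) mod 3 = (h * q) mod 3"
    by (metis dmod mod_mult_right_eq mult.commute)
  have "3 dvd m - q * dmin" using mod_eq_dvd_iff_nat[OF ml[folded dmin_def], of 3] mm qdm by simp
  then obtain t where t: "m - q * dmin = 3 * t" by (auto simp: dvd_def)
  have mt: "m = q * dmin + 3 * t" using t ml[folded dmin_def] by simp
  have "m \<le> q * H" using mu hH by (simp add: mult.assoc)
  moreover have "q * H = q * dmin + 3 * (q * K)" unfolding HK by (simp add: algebra_simps)
  ultimately have "t \<le> card A * K" using mt cA by simp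
  then obtain k where k: "\<forall>a\<in>A. k a \<le> K" "sum k A = t" using distribute[OF finA] by blast
  define dl where "dl x = dmin + 3 * k x" for x
  have "\<forall>x\<in>A. admissible h u (dl x)"
  proof
    fix x assume x: "x \<in> A"
    have "2 * dl x \<le> 2 * H" unfolding dl_def HK using k(1) x by simp
    then show "admissible h u (dl x)" unfolding admissible_def dl_def using dpos dmod hH by simp
  qed
  moreover have "sum dl A = m" unfolding dl_def mt using k cA
    by (simp add: sum.distrib sum_distrib_left[symmetric])
  ultimately show ?thesis by blast
qed



theorem theorem3p3:
  fixes h u q :: nat
  assumes "0 < h" "0 < u" "0 < q"
    and "h mod 6 = 2 \<or> h mod 6 = 4"
    and "u mod 3 = 0" and "u \<ge> 6"
    and "\<not> 3 dvd q"
    and "GDD_exists {u + 1} (replicate_mset (u + 1) q)"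
    and "\<forall>d. admissible h u d \<longrightarrow> GDD_exists {4} (type_hu_d h u d)"
  shows "\<forall>m::nat. m mod 3 = (h * q) mod 3 \<and> q * (LEAST d. admissible h u d) \<le> m
            \<and> 2 * m \<le> q * h * (u - 1) \<longrightarrow> GDD_exists {4} (type_hu_d (h * q) u m)"
proof (intro allI impI)
  fix m :: nat
  assume hm: "m mod 3 = (h * q) mod 3 \<and> q * (LEAST d. admissible h u d) \<le> m
            \<and> 2 * m \<le> q * h * (u - 1)"
  then have mm: "m mod 3 = (h * q) mod 3" and ml: "q * (LEAST d. admissible h u d) \<le> m"
    and mu: "2 * m \<le> q * h * (u - 1)" by auto
  obtain V0 :: "nat set" and G0 B0 where td: "is_GDD {u + 1} V0 G0 B0"
    and tyG0: "gdd_type G0 = replicate_mset (u + 1) q"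
    using assms(8) unfolding GDD_exists_def by blast
  note D = is_GDD_D[OF td]
  have finG0: "finite G0"
  proof -
    have "G0 \<subseteq> Pow V0" using D(2) by blast
    then show ?thesis using D(1) by (meson finite_Pow_iff finite_subset)
  qed
  have "size (gdd_type G0) = card G0" by (simp add: gdd_type_def)
  then have cG0: "card G0 = u + 1" using tyG0 by simp
  have cg: "\<And>g. g \<in> G0 \<Longrightarrow> card g = q"
  proof -
    fix g assume g: "g \<in> G0"
    then have "card g \<in># gdd_type G0" unfolding gdd_type_def using finG0 by simp
    then show "card g = q" unfolding tyG0 by (simp split: if_splits)
  qed
  have "G0 \<noteq> {}" using cG0 by auto
  then obtain ginf where ginf: "ginf \<in> G0" by blast
  have finginf: "finite ginf" using D(1) D(2) ginf by (meson finite_subset)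
  obtain dl where dl: "\<forall>x\<in>ginf. admissible h u (dl x)" "sum dl ginf = m"
    using numeric[OF assms(1) assms(6) assms(5) assms(4) mm ml mu finginf cg[OF ginf]] by blast
  define w where "w x = (if x \<in> ginf then dl x else h)" for x
  have wpos: "\<And>x. 0 < w x" using dl(1) assms(1) unfolding w_def admissible_def by auto
  have "\<forall>b\<in>B0. \<exists>B. is_GDD {4} (Sigma b (\<lambda>x. {..<w x})) ((\<lambda>x. {x} \<times> {..<w x}) ` b) B"
  proof
    fix b assume b: "b \<in> B0"
    have cb: "card b = u + 1" using D(6) b by auto
    have bV: "b \<subseteq> V0" using D(6) b by auto
    have finb: "finite b" using bV D(1) finite_subset by blast
    obtain e where e: "e \<in> b" "e \<in> ginf" using block_meets[OF td b _ ginf] cb cG0 by auto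
    have wc: "\<forall>x\<in>b-{e}. w x = h"
    proof
      fix x assume x: "x \<in> b - {e}"
      have "x \<notin> ginf"
      proof
        assume "x \<in> ginf"
        then show False using D(8) b ginf e x by blast
      qed
      then show "w x = h" unfolding w_def by simp
    qed
    have "admissible h u (w e)" using dl(1) e unfolding w_def by simp
    then have "GDD_exists {4} (type_hu_d h u (w e))" using assms(9) by blast
    then obtain V' :: "nat set" and G' B' where gi: "is_GDD {4} V' G' B'"
      and tyi: "gdd_type G' = replicate_mset u h + {#w e#}"
      unfolding GDD_exists_def type_hu_d_def by blast
    note DI = is_GDD_D[OF gi]
    have finG': "finite G'"
    proof -
      have "G' \<subseteq> Pow V'" using DI(2) by blast
      then show ?thesis using DI(1) by (meson finite_Pow_iff finite_subset)
    qed
    obtain \<sigma> where sig: "bij_betw \<sigma> G' b" "\<forall>g\<in>G'. card g = w (\<sigma> g)"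
      using match[where w=w and n=u and c=h, OF finG' finb e(1) tyi[unfolded gdd_type_def]] cb wc by auto
    show "\<exists>B. is_GDD {4} (Sigma b (\<lambda>x. {..<w x})) ((\<lambda>x. {x} \<times> {..<w x}) ` b) B"
      by (rule ingredient[OF gi sig])
  qed
  then obtain Bb where Bb: "\<forall>b\<in>B0. is_GDD {4} (Sigma b (\<lambda>x. {..<w x})) ((\<lambda>x. {x} \<times> {..<w x}) ` b) (Bb b)"
    by (rule bchoice[THEN exE]) blast
  define S where "S g = Sigma g (\<lambda>x. {..<w x})" for g
  have W: "is_GDD {4} (Sigma V0 (\<lambda>x. {..<w x})) (S ` G0) (\<Union>b\<in>B0. Bb b)"
    unfolding S_def using wilson[OF td _ Bb] wpos by blast
  have fstS: "\<And>g. fst ` S g = g"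
  proof
    fix g show "fst ` S g \<subseteq> g" unfolding S_def by auto
    show "g \<subseteq> fst ` S g"
    proof
      fix x assume "x \<in> g"
      then have "(x, 0) \<in> S g" unfolding S_def using wpos by auto
      then show "x \<in> fst ` S g" by force
    qed
  qed
  have injS: "inj_on S G0"
  proof
    fix g1 g2 assume "S g1 = S g2"
    then have "fst ` S g1 = fst ` S g2" by simp
    then show "g1 = g2" using fstS by simp
  qed
  have cardS: "\<And>g. g \<in> G0 \<Longrightarrow> card (S g) = sum w g"
  proof -
    fix g assume g: "g \<in> G0"
    have "finite g" using D(1) D(2) g by (meson finite_subset)
    then show "card (S g) = sum w g" unfolding S_def by simp
  qed
  have c_other: "\<And>g. g \<in> G0 - {ginf} \<Longrightarrow> card (S g) = h * q"
  proof -
    fix g assume g: "g \<in> G0 - {ginf}"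
    then have "g \<inter> ginf = {}" using D(4) ginf by blast
    then have "sum w g = sum (\<lambda>_. h) g" unfolding w_def by (intro sum.cong) auto
    also have "\<dots> = h * q" using cg g by simp
    finally show "card (S g) = h * q" using cardS g by simp
  qed
  have c_inf: "card (S ginf) = m"
  proof -
    have "sum w ginf = sum dl ginf" unfolding w_def by (intro sum.cong) auto
    then show ?thesis using cardS[OF ginf] dl(2) by simp
  qed
  have "gdd_type (S ` G0) = image_mset card (image_mset S (mset_set G0))"
    unfolding gdd_type_def using image_mset_mset_set[OF injS] by simp
  also have "\<dots> = image_mset (\<lambda>g. card (S g)) (mset_set G0)" by (simp add: multiset.map_comp comp_def)
  also have "mset_set G0 = add_mset ginf (mset_set (G0 - {ginf}))"
    using mset_set.remove[OF finG0 ginf] .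
  also have "image_mset (\<lambda>g. card (S g)) (add_mset ginf (mset_set (G0 - {ginf})))
      = add_mset m (image_mset (\<lambda>g. card (S g)) (mset_set (G0 - {ginf})))" using c_inf by simp
  also have "image_mset (\<lambda>g. card (S g)) (mset_set (G0 - {ginf})) = image_mset (\<lambda>_. h * q) (mset_set (G0 - {ginf}))"
    using finG0 c_other by (intro image_mset_cong) auto
  also have "\<dots> = replicate_mset (card (G0 - {ginf})) (h * q)"
    using image_mset_const_eq[of "h * q" "mset_set (G0 - {ginf})"] by simp
  also have "card (G0 - {ginf}) = u" using cG0 finG0 ginf by simp
  finally have "gdd_type (S ` G0) = type_hu_d (h * q) u m" unfolding type_hu_d_def by simp
  then show "GDD_exists {4} (type_hu_d (h * q) u m)" using to_nat[OF W] by blast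
qed


end
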